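(* Every solution $(x(t),y(t))$ of the system (FHN-CNN) with initial state $(x^0,y^0)\in H$ satisfies, for all $t\ge 0$, $$\sum_{i=1}^n\big(|x_i(t)|^2+|y_i(t)|^2\big)\le\frac{1}{\min\{C_1,1\}}\Big[e^{-\delta t}\sum_{i=1}^n\big(C_1|x_i^0|^2+|y_i^0|^2\big)+\frac{n}{\delta}\Big(C_2+\frac{\delta\beta}{b}\Big)\Big],$$ where $C_1=\frac{\delta}{2b}$ and $C_2=\frac{b}{4\delta\lambda}\Big(\frac{\delta^2}{2b}+\frac{\delta}{2}+\frac{2c^2}{\delta}\Big)^2$.
   Context: Fix an integer $n\ge 4$ and positive constants $a,b,c,\delta,p$. Let $f\in C^1(\mathbb{R},\mathbb{R})$ satisfy, for some positive constants $\lambda,\beta,\gamma$: $f(s)s\le -\lambda s^4+\beta$ and $f'(s)\le\gamma$ for all $s\in\mathbb{R}$. The FitzHugh–Nagumo cellular neural network with boundary feedback (FHN-CNN) is the ODE system for $t>0$, $1\le i\le n$: $$\frac{dx_i}{dt}=a(x_{i-1}-2x_i+x_{i+1})+f(x_i)-by_i+pu_i,\qquad \frac{dy_i}{dt}=cx_i-\delta y_i,$$ with the periodic convention $x_0=x_n$, $x_{n+1}=x_1$, and the boundary feedback $u_1=u_{n+1}=x_n-x_1$, $u_i=0$ for $2\le i\le n-1$, $u_n=u_0=x_1-x_n$. The state space is $H=\mathbb{R}^{2n}$ with norm $\|(x,y)\|^2=\sum_{i=1}^n(|x_i|^2+|y_i|^2)$; initial data $x_i(0)=x_i^0$, $y_i(0)=y_i^0$.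 *)

theory Defs
  imports Complex_Main
begin

text \<open>States are functions nat => real, used on indices 1..n.
  Periodic convention: index 0 means n, index n+1 means 1.\<close>
definition xper :: "nat \<Rightarrow> (nat \<Rightarrow> real) \<Rightarrow> nat \<Rightarrow> real" where
  "xper n v i = (if i = 0 then v n else if i = n + 1 then v 1 else v i)"

definition fb :: "nat \<Rightarrow> (nat \<Rightarrow> real) \<Rightarrow> nat \<Rightarrow> real" where
  "fb n v i = (if i = 1 then v n - v 1 else if i = n then v 1 - v n else 0)"

definition FHN_solution ::
  "nat \<Rightarrow> real \<Rightarrow> real \<Rightarrow> real \<Rightarrow> real \<Rightarrow> real \<Rightarrow> (real \<Rightarrow> real) \<Rightarrow>
   (nat \<Rightarrow> real) \<Rightarrow> (nat \<Rightarrow> real) \<Rightarrow> (real \<Rightarrow> nat \<Rightarrow> real) \<Rightarrow> (real \<Rightarrow> nat \<Rightarrow> real) \<Rightarrow> bool"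
where
  "FHN_solution n a b c \<delta> p f x0 y0 x y \<longleftrightarrow>
    (\<forall>i\<in>{1..n}.
       continuous_on {0..} (\<lambda>t. x t i) \<and> continuous_on {0..} (\<lambda>t. y t i) \<and>
       x 0 i = x0 i \<and> y 0 i = y0 i \<and>
       (\<forall>t>0.
          ((\<lambda>s. x s i) has_real_derivative
             (a * (xper n (x t) (i - 1) - 2 * x t i + xper n (x t) (i + 1))
              + f (x t i) - b * y t i + p * fb n (x t) i)) (at t) \<and>
          ((\<lambda>s. y s i) has_real_derivative (c * x t i - \<delta> * y t i)) (at t)))"

end

theory Submission imports Defs begin

lemma shift_prev:
  assumes "n \<ge> 2"
  shows "(\<Sum>i=1..n. (xper n v (i - 1))^2) = (\<Sum>i=1..n. (v i)^2)"
proof -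
  obtain m where m: "n = Suc m" "m \<ge> 1" using assms by (cases n) auto
  have "(\<Sum>i=1..n. (xper n v (i - 1))^2) = (xper n v 0)^2 + (\<Sum>i=Suc 1..Suc m. (xper n v (i - 1))^2)"
    using m by (simp add: sum.atLeast_Suc_atMost)
  also have "(\<Sum>i=Suc 1..Suc m. (xper n v (i - 1))^2) = (\<Sum>i=1..m. (xper n v i)^2)"
    by (subst sum.shift_bounds_cl_Suc_ivl) simp
  also have "\<dots> = (\<Sum>i=1..m. (v i)^2)"
    using m by (intro sum.cong) (auto simp: xper_def)
  finally show ?thesis using m by (simp add: xper_def)
qed

lemma shift_next:
  assumes "n \<ge> 2"
  shows "(\<Sum>i=1..n. (xper n v (i + 1))^2) = (\<Sum>i=1..n. (v i)^2)"
proof -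
  obtain m where m: "n = Suc m" "m \<ge> 1" using assms by (cases n) auto
  have "(\<Sum>i=1..n. (xper n v (i + 1))^2) = (\<Sum>i=1..m. (xper n v (i + 1))^2) + (xper n v (n+1))^2"
    using m by simp
  also have "(\<Sum>i=1..m. (xper n v (i + 1))^2) = (\<Sum>i=1..m. (v (Suc i))^2)"
    using m by (intro sum.cong) (auto simp: xper_def)
  also have "\<dots> = (\<Sum>i=Suc 1..Suc m. (v i)^2)"
    by (subst sum.shift_bounds_cl_Suc_ivl) simp
  finally show ?thesis using m by (simp add: xper_def sum.atLeast_Suc_atMost add.commute)
qed

lemma coupling:
  assumes "n \<ge> 2"
  shows "(\<Sum>i=1..n. v i * (xper n v (i - 1) - 2 * v i + xper n v (i + 1))) \<le> 0"
proof -
  have "(\<Sum>i=1..n. v i * (xper n v (i - 1) - 2 * v i + xper n v (i + 1)))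
     \<le> (\<Sum>i=1..n. ((xper n v (i - 1))^2 + (xper n v (i + 1))^2)/2 - (v i)^2)"
  proof (rule sum_mono)
    fix i
    show "v i * (xper n v (i - 1) - 2 * v i + xper n v (i + 1))
        \<le> ((xper n v (i - 1))^2 + (xper n v (i + 1))^2)/2 - (v i)^2"
      using sum_squares_ge_zero[of "v i - xper n v (i - 1)" "v i - xper n v (i + 1)"]
      by (simp add: power2_eq_square algebra_simps)
  qed
  also have "\<dots> = 0"
    using shift_prev[OF assms, of v] shift_next[OF assms, of v]
    by (simp add: sum_subtractf sum_divide_distrib[symmetric] sum.distrib)
  finally show ?thesis .
qed

lemma feedback:
  assumes "n \<ge> 2"
  shows "(\<Sum>i=1..n. v i * fb n v i) \<le> 0"
proof -
  have "(\<Sum>i=1..n. v i * fb n v i) = (\<Sum>i\<in>{1,n}. v i * fb n v i)"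
    using assms by (intro sum.mono_neutral_right) (auto simp: fb_def)
  also have "\<dots> = 0 - (v n - v 1)^2"
    using assms by (simp add: fb_def power2_eq_square algebra_simps)
  finally show ?thesis by simp
qed

lemma pt:
  fixes b \<delta> lam c F X Y \<beta> :: real
  assumes "b > 0" "\<delta> > 0" "lam > 0" "F * X \<le> - lam * X^4 + \<beta>"
  shows "2*(\<delta>/(2*b))*(F*X) + (2*c-\<delta>)*X*Y - \<delta>*Y^2 + \<delta>*(\<delta>/(2*b))*X^2
     \<le> b/(4*\<delta>*lam)*(\<delta>^2/(2*b)+\<delta>/2+2*c^2/\<delta>)^2 + \<delta>*\<beta>/b"
proof -
  define C1 where "C1 = \<delta>/(2*b)"
  define K where "K = \<delta>*C1 + (2*c-\<delta>)^2/(4*\<delta>)"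
  define M where "M = \<delta>^2/(2*b)+\<delta>/2+2*c^2/\<delta>"
  have C1p: "C1 > 0" using assms by (simp add: C1_def)
  have h1: "(2*c-\<delta>)*X*Y - \<delta>*Y^2 \<le> (2*c-\<delta>)^2*X^2/(4*\<delta>)"
  proof -
    have "0 \<le> ((2*c-\<delta>)*X - 2*\<delta>*Y)^2" by simp
    then have "4*\<delta>*((2*c-\<delta>)*X*Y - \<delta>*Y^2) \<le> (2*c-\<delta>)^2*X^2"
      by (simp add: power2_eq_square algebra_simps)
    then show ?thesis using assms by (simp add: field_simps)
  qed
  have h2: "2*C1*(F*X) \<le> 2*C1*(- lam * X^4 + \<beta>)"
    using C1p assms by simp
  have h3: "K*X^2 - 2*C1*lam*X^4 \<le> K^2/(8*C1*lam)"
  proof -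
    have "0 \<le> (K - 4*C1*lam*X^2)^2" by simp
    then have "8*C1*lam*(K*X^2 - 2*C1*lam*X^4) \<le> K^2"
      by (simp add: power2_eq_square eval_nat_numeral algebra_simps)
    then show ?thesis using C1p assms by (simp add: field_simps)
  qed
  have K0: "0 \<le> K" using C1p assms by (simp add: K_def)
  have KM: "K \<le> M"
  proof -
    have "0 \<le> (2*c + \<delta>)^2" by simp
    then have "0 \<le> (2*c + \<delta>)^2/(4*\<delta>)" using assms by simp
    moreover have "M - K = (2*c + \<delta>)^2/(4*\<delta>)"
      unfolding M_def K_def C1_def using assms
      by (simp add: field_simps power2_eq_square)
    ultimately show ?thesis by simp
  qed
  have h4: "K^2 \<le> M^2" using K0 KM by (simp add: power_mono)
  have h5: "K^2/(8*C1*lam) = b/(4*\<delta>*lam)*K^2"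
    using assms by (simp add: C1_def field_simps)
  have h6: "b/(4*\<delta>*lam)*K^2 \<le> b/(4*\<delta>*lam)*M^2"
    using h4 assms by (intro mult_left_mono) auto
  have e: "2*C1*\<beta> = \<delta>*\<beta>/b" using assms by (simp add: C1_def)
  have "2*C1*(F*X) + (2*c-\<delta>)*X*Y - \<delta>*Y^2 + \<delta>*C1*X^2
      \<le> 2*C1*(- lam * X^4 + \<beta>) + (2*c-\<delta>)^2*X^2/(4*\<delta>) + \<delta>*C1*X^2"
    using h1 h2 by linarith
  also have "\<dots> = (K*X^2 - 2*C1*lam*X^4) + 2*C1*\<beta>"
    by (simp add: K_def algebra_simps)
  also have "\<dots> \<le> b/(4*\<delta>*lam)*M^2 + \<delta>*\<beta>/b"
    using h3 h5 h6 e by linarith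
  finally show ?thesis by (simp add: C1_def M_def)
qed

theorem mainTheorem2:
  fixes n :: nat and a b c \<delta> p lam \<beta> \<gamma> :: real
    and f f' :: "real \<Rightarrow> real"
    and x0 y0 :: "nat \<Rightarrow> real" and x y :: "real \<Rightarrow> nat \<Rightarrow> real"
  assumes "n \<ge> 4"
    and "a > 0" "b > 0" "c > 0" "\<delta> > 0" "p > 0"
    and "lam > 0" "\<beta> > 0" "\<gamma> > 0"
    and "\<And>s. (f has_real_derivative f' s) (at s)"
    and "continuous_on UNIV f'"
    and "\<And>s. f s * s \<le> - lam * s ^ 4 + \<beta>"
    and "\<And>s. f' s \<le> \<gamma>"
    and "FHN_solution n a b c \<delta> p f x0 y0 x y"
  shows "\<forall>t\<ge>0.
    (let C1 = \<delta> / (2 * b);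
         C2 = b / (4 * \<delta> * lam) * (\<delta>^2 / (2 * b) + \<delta> / 2 + 2 * c^2 / \<delta>)^2
     in (\<Sum>i=1..n. (\<bar>x t i\<bar>^2 + \<bar>y t i\<bar>^2))
        \<le> 1 / min C1 1 * (exp (- \<delta> * t) * (\<Sum>i=1..n. (C1 * \<bar>x0 i\<bar>^2 + \<bar>y0 i\<bar>^2))
            + real n / \<delta> * (C2 + \<delta> * \<beta> / b)))"
proof (intro allI impI)
  fix T :: real assume T0: "T \<ge> 0"
  define C1 where "C1 = \<delta> / (2 * b)"
  define C2 where "C2 = b / (4 * \<delta> * lam) * (\<delta>^2 / (2 * b) + \<delta> / 2 + 2 * c^2 / \<delta>)^2"
  define R where "R = real n * (C2 + \<delta> * \<beta> / b)"
  define V where "V t = (\<Sum>i=1..n. C1 * (x t i)^2 + (y t i)^2)" for t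
  define dx where "dx t i = a * (xper n (x t) (i - 1) - 2 * x t i + xper n (x t) (i + 1))
              + f (x t i) - b * y t i + p * fb n (x t) i" for t i
  define dy where "dy t i = c * x t i - \<delta> * y t i" for t i
  define V' where "V' t = (\<Sum>i=1..n. 2 * C1 * x t i * dx t i + 2 * y t i * dy t i)" for t
  have n2: "n \<ge> 2" using assms(1) by simp
  have C1p: "C1 > 0" using assms by (simp add: C1_def)
  have sol: "\<And>i. i \<in> {1..n} \<Longrightarrow> continuous_on {0..} (\<lambda>t. x t i) \<and> continuous_on {0..} (\<lambda>t. y t i) \<and>
       x 0 i = x0 i \<and> y 0 i = y0 i \<and>
       (\<forall>t>0. ((\<lambda>s. x s i) has_real_derivative dx t i) (at t) \<and>
          ((\<lambda>s. y s i) has_real_derivative dy t i) (at t))"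
    using assms(14) unfolding FHN_solution_def dx_def dy_def by blast
  have derV: "(V has_real_derivative V' t) (at t)" if t: "t > 0" for t
  proof -
    have "((\<lambda>s. \<Sum>i=1..n. C1 * (x s i)^2 + (y s i)^2) has_real_derivative V' t) (at t)"
      unfolding V'_def
    proof (rule DERIV_sum)
      fix i assume i: "i \<in> {1..n}"
      have hx: "((\<lambda>s. x s i) has_real_derivative dx t i) (at t)"
        and hy: "((\<lambda>s. y s i) has_real_derivative dy t i) (at t)" using sol[OF i] t by auto
      show "((\<lambda>s. C1 * (x s i)^2 + (y s i)^2) has_real_derivative
             2 * C1 * x t i * dx t i + 2 * y t i * dy t i) (at t)"
        by (rule derivative_eq_intros hx hy refl | simp)+
    qed
    then show ?thesis by (simp add: V_def[abs_def])
  qed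
  have contV: "continuous_on {0..} V"
    unfolding V_def[abs_def] using sol by (intro continuous_intros) auto
  have bound: "V' t + \<delta> * V t \<le> R" if t: "t > 0" for t
  proof -
    have "V' t + \<delta> * V t = 2 * C1 * a * (\<Sum>i=1..n. x t i * (xper n (x t) (i - 1) - 2 * x t i + xper n (x t) (i + 1)))
        + 2 * C1 * p * (\<Sum>i=1..n. x t i * fb n (x t) i)
        + (\<Sum>i=1..n. 2*C1*(f (x t i) * x t i) + (2*c-\<delta>)*x t i*y t i - \<delta>*(y t i)^2 + \<delta>*C1*(x t i)^2)"
      unfolding V'_def V_def dx_def dy_def
      using assms(3) by (simp add: sum_distrib_left sum.distrib[symmetric] C1_def power2_eq_square algebra_simps)
    also have "\<dots> \<le> 0 + 0 + (\<Sum>i=1..n. C2 + \<delta> * \<beta> / b)"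
    proof (intro add_mono)
      show "2 * C1 * a * (\<Sum>i=1..n. x t i * (xper n (x t) (i - 1) - 2 * x t i + xper n (x t) (i + 1))) \<le> 0"
        using coupling[OF n2, of "x t"] C1p assms(2) by (simp add: mult_nonneg_nonpos)
      show "2 * C1 * p * (\<Sum>i=1..n. x t i * fb n (x t) i) \<le> 0"
        using feedback[OF n2, of "x t"] C1p assms(6) by (simp add: mult_nonneg_nonpos)
      show "(\<Sum>i=1..n. 2*C1*(f (x t i) * x t i) + (2*c-\<delta>)*x t i*y t i - \<delta>*(y t i)^2 + \<delta>*C1*(x t i)^2)
           \<le> (\<Sum>i=1..n. C2 + \<delta> * \<beta> / b)"
        unfolding C1_def C2_def
        by (intro sum_mono pt) (use assms in auto)
    qed
    also have "\<dots> = R" by (simp add: R_def)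
    finally show ?thesis .
  qed
  define W where "W t = exp (\<delta> * t) * (V t - R / \<delta>)" for t
  have "W T \<le> W 0"
  proof (rule DERIV_nonpos_imp_decreasing_open[OF T0])
    fix t assume t: "0 < t" "t < T"
    have "(W has_real_derivative exp (\<delta> * t) * \<delta> * (V t - R / \<delta>) + exp (\<delta> * t) * V' t) (at t)"
      unfolding W_def[abs_def]
      by (rule derivative_eq_intros derV[OF t(1)] refl | simp)+
    moreover have "exp (\<delta> * t) * \<delta> * (V t - R / \<delta>) + exp (\<delta> * t) * V' t
        = exp (\<delta> * t) * (V' t + \<delta> * V t - R)"
      using assms(5) by (simp add: field_simps)
    moreover have "exp (\<delta> * t) * (V' t + \<delta> * V t - R) \<le> 0"
      using bound[OF t(1)] by (simp add: mult_nonneg_nonpos)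
    ultimately show "\<exists>y. (W has_real_derivative y) (at t) \<and> y \<le> 0" by auto
  next
    show "continuous_on {0..T} W"
      unfolding W_def[abs_def]
      by (intro continuous_intros continuous_on_subset[OF contV]) auto
  qed
  then have "exp (- \<delta> * T) * (exp (\<delta> * T) * (V T - R / \<delta>)) \<le> exp (- \<delta> * T) * (V 0 - R / \<delta>)"
    unfolding W_def by (intro mult_left_mono) auto
  also have "exp (- \<delta> * T) * (exp (\<delta> * T) * (V T - R / \<delta>)) = V T - R / \<delta>"
    by (simp add: mult.assoc[symmetric] exp_add[symmetric])
  finally have "V T \<le> exp (- \<delta> * T) * (V 0 - R / \<delta>) + R / \<delta>" by simp
  moreover have "R \<ge> 0" unfolding R_def C2_def using assms by simp
  ultimately have VT: "V T \<le> exp (- \<delta> * T) * V 0 + R / \<delta>"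
  proof -
    assume a1: "V T \<le> exp (- \<delta> * T) * (V 0 - R / \<delta>) + R / \<delta>" and a2: "R \<ge> 0"
    have "0 \<le> exp (- \<delta> * T) * (R / \<delta>)" using a2 assms(5) by simp
    moreover have "exp (- \<delta> * T) * (V 0 - R / \<delta>) = exp (- \<delta> * T) * V 0 - exp (- \<delta> * T) * (R / \<delta>)"
      by (simp add: right_diff_distrib)
    ultimately show ?thesis using a1 by linarith
  qed
  have V0: "V 0 = (\<Sum>i=1..n. (C1 * \<bar>x0 i\<bar>^2 + \<bar>y0 i\<bar>^2))"
    unfolding V_def using sol by (intro sum.cong) auto
  define m where "m = min C1 1"
  have mp: "m > 0" using C1p by (simp add: m_def)
  have "m * (\<Sum>i=1..n. (\<bar>x T i\<bar>^2 + \<bar>y T i\<bar>^2)) \<le> V T"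
    unfolding V_def sum_distrib_left
  proof (rule sum_mono)
    fix i
    have "m * (x T i)^2 \<le> C1 * (x T i)^2" by (intro mult_right_mono) (auto simp: m_def)
    moreover have "m * (y T i)^2 \<le> (y T i)^2" using mult_right_mono[of m 1 "(y T i)^2"] by (auto simp: m_def)
    ultimately show "m * (\<bar>x T i\<bar>^2 + \<bar>y T i\<bar>^2) \<le> C1 * (x T i)^2 + (y T i)^2"
      by (simp add: distrib_left)
  qed
  then have "(\<Sum>i=1..n. (\<bar>x T i\<bar>^2 + \<bar>y T i\<bar>^2)) \<le> 1 / m * V T"
    using mp by (simp add: field_simps mult.commute)
  also have "\<dots> \<le> 1 / m * (exp (- \<delta> * T) * V 0 + R / \<delta>)"
    using VT mp by (intro mult_left_mono) auto
  finally show "let C1 = \<delta> / (2 * b);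
         C2 = b / (4 * \<delta> * lam) * (\<delta>^2 / (2 * b) + \<delta> / 2 + 2 * c^2 / \<delta>)^2
     in (\<Sum>i=1..n. (\<bar>x T i\<bar>^2 + \<bar>y T i\<bar>^2))
        \<le> 1 / min C1 1 * (exp (- \<delta> * T) * (\<Sum>i=1..n. (C1 * \<bar>x0 i\<bar>^2 + \<bar>y0 i\<bar>^2))
            + real n / \<delta> * (C2 + \<delta> * \<beta> / b))"
    unfolding Let_def V0 m_def R_def C1_def C2_def by (simp add: mult.assoc)
qed

end
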